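(* Let $f:\Omega_D\to\mathbb{O}$ be a slice function of class $C^1$. Then $f'_s(x)=\frac16\,\mathrm{Im}(x)^{-1}\big(\Gamma(f)(x)\big)$ for every $x\in\Omega_D\setminus\mathbb{R}$.
   Context: Octonions $\mathbb{O}=\mathbb{H}+\ell\mathbb{H}$ with product $(a+\ell b)(c+\ell d)=(ac-d\bar b)+\ell(\bar a d+cb)$, conjugation $\overline{a+\ell b}=\bar a-\ell b$; real basis $(1,e_1,\dots,e_7)=(1,i,j,k,\ell,\ell i,\ell j,\ell k)$, $x=x_0+\sum_{h=1}^7x_he_h$, $\mathrm{Im}(x)=\sum_{h=1}^7x_he_h$. $\mathbb{S}=\{I\in\mathbb{O}:I^2=-1\}$. $D\subset\mathbb{R}^2$ non-empty open, invariant under $(\alpha,\beta)\mapsto(\alpha,-\beta)$, $\Omega_D=\{\alpha+\beta I:(\alpha,\beta)\in D,I\in\mathbb{S}\}$, assumed connected. A slice function $f$ is one of the form $f(\alpha+\beta I)=F_1(\alpha,\beta)+IF_2(\alpha,\beta)$ for a (unique) stem function $(F_1,F_2):D\to\mathbb{O}^2$, $F_1$ even and $F_2$ odd in $\beta$. The spherical derivative is $f'_s:\Omega_D\setminus\mathbb{R}\to\mathbb{O}$, $f'_s(\alpha+\beta I)=F_2(\alpha,\beta)/\beta$. For $m<n$ in $\{1,\dots,7\}$, $L_{mn}=x_m\frac{\partial}{\partial x_n}-x_n\frac{\partial}{\partial x_m}$, and the spherical Dirac operator on $C^1$ functions is $\Gamma(f)(x)=-\sum_{1\le m<n\le7}e_m\big(e_n\,L_{mn}(f)(x)\big)$.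 *)

theory Defs
  imports "HOL-Analysis.Analysis"
begin

text \<open>Quaternions a + b i + c j + d k are represented as ((a,b),(c,d)) :: (real*real)*(real*real);
octonions a + l b (a, b quaternions) as pairs (a,b).\<close>

type_synonym quat = "(real \<times> real) \<times> (real \<times> real)"
type_synonym oct = "quat \<times> quat"

definition qmul :: "quat \<Rightarrow> quat \<Rightarrow> quat" where
  "qmul p q = (case p of ((a1,b1),(c1,d1)) \<Rightarrow> case q of ((a2,b2),(c2,d2)) \<Rightarrow>
     ((a1*a2 - b1*b2 - c1*c2 - d1*d2, a1*b2 + b1*a2 + c1*d2 - d1*c2),
      (a1*c2 - b1*d2 + c1*a2 + d1*b2, a1*d2 + b1*c2 - c1*b2 + d1*a2)))"

definition qconj :: "quat \<Rightarrow> quat" where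
  "qconj p = (case p of ((a,b),(c,d)) \<Rightarrow> ((a,-b),(-c,-d)))"

text \<open>Cayley--Dickson: (a + l b)(c + l d) = (ac - d conj b) + l (conj a d + c b).\<close>
definition omul :: "oct \<Rightarrow> oct \<Rightarrow> oct" where
  "omul x y = (case x of (a,b) \<Rightarrow> case y of (c,d) \<Rightarrow>
     (qmul a c - qmul d (qconj b), qmul (qconj a) d + qmul c b))"

definition oconj :: "oct \<Rightarrow> oct" where
  "oconj x = (case x of (a,b) \<Rightarrow> (qconj a, - b))"

text \<open>Real basis (1,e1,...,e7) = (1,i,j,k,l,li,lj,lk).\<close>
definition obasis :: "nat \<Rightarrow> oct" where
  "obasis h = (if h = 0 then (((1,0),(0,0)),0)
     else if h = 1 then (((0,1),(0,0)),0)
     else if h = 2 then (((0,0),(1,0)),0)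
     else if h = 3 then (((0,0),(0,1)),0)
     else if h = 4 then (0,((1,0),(0,0)))
     else if h = 5 then (0,((0,1),(0,0)))
     else if h = 6 then (0,((0,0),(1,0)))
     else if h = 7 then (0,((0,0),(0,1)))
     else 0)"

definition ocoord :: "oct \<Rightarrow> nat \<Rightarrow> real" where
  "ocoord x h = inner x (obasis h)"

definition oIm :: "oct \<Rightarrow> oct" where
  "oIm x = (\<Sum>h\<in>{1..7}. ocoord x h *\<^sub>R obasis h)"

definition oinv :: "oct \<Rightarrow> oct" where
  "oinv x = (1 / (norm x)\<^sup>2) *\<^sub>R oconj x"

definition sphere_S :: "oct set" where
  "sphere_S = {I. omul I I = - obasis 0}"

definition OmegaD :: "(real \<times> real) set \<Rightarrow> oct set" where
  "OmegaD D = {a *\<^sub>R obasis 0 + b *\<^sub>R I | a b I. (a,b) \<in> D \<and> I \<in> sphere_S}"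

definition is_stem :: "(real \<times> real) set \<Rightarrow> (oct \<Rightarrow> oct) \<Rightarrow> (real \<times> real \<Rightarrow> oct) \<Rightarrow> (real \<times> real \<Rightarrow> oct) \<Rightarrow> bool" where
  "is_stem D f F1 F2 \<longleftrightarrow>
     (\<forall>a b. (a,b) \<in> D \<longrightarrow> F1 (a,-b) = F1 (a,b) \<and> F2 (a,-b) = - F2 (a,b)) \<and>
     (\<forall>a b I. (a,b) \<in> D \<longrightarrow> I \<in> sphere_S \<longrightarrow>
        f (a *\<^sub>R obasis 0 + b *\<^sub>R I) = F1 (a,b) + omul I (F2 (a,b)))"

definition slice_function :: "(real \<times> real) set \<Rightarrow> (oct \<Rightarrow> oct) \<Rightarrow> bool" where
  "slice_function D f \<longleftrightarrow> (\<exists>F1 F2. is_stem D f F1 F2)"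

definition spherical_derivative_stem :: "(real \<times> real \<Rightarrow> oct) \<Rightarrow> real \<Rightarrow> real \<Rightarrow> oct" where
  "spherical_derivative_stem F2 a b = (1 / b) *\<^sub>R F2 (a,b)"

definition C1_on :: "oct set \<Rightarrow> (oct \<Rightarrow> oct) \<Rightarrow> bool" where
  "C1_on U f \<longleftrightarrow> (\<exists>f' :: oct \<Rightarrow> oct \<Rightarrow>\<^sub>L oct.
      (\<forall>x\<in>U. (f has_derivative blinfun_apply (f' x)) (at x)) \<and> continuous_on U f')"

definition opartial :: "(oct \<Rightarrow> oct) \<Rightarrow> nat \<Rightarrow> oct \<Rightarrow> oct" where
  "opartial f n x = frechet_derivative f (at x) (obasis n)"

definition Lop :: "nat \<Rightarrow> nat \<Rightarrow> (oct \<Rightarrow> oct) \<Rightarrow> oct \<Rightarrow> oct" where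
  "Lop m n f x = ocoord x m *\<^sub>R opartial f n x - ocoord x n *\<^sub>R opartial f m x"

definition Gamma :: "(oct \<Rightarrow> oct) \<Rightarrow> oct \<Rightarrow> oct" where
  "Gamma f x = - (\<Sum>(m,n)\<in>{(m,n). 1 \<le> m \<and> m < n \<and> n \<le> 7}.
       omul (obasis m) (omul (obasis n) (Lop m n f x)))"

end

theory Submission imports Defs begin

lemma oct_cases: obtains x0 x1 x2 x3 x4 x5 x6 x7 where "x = (((x0,x1),(x2,x3)),((x4,x5),(x6,x7)))"
  by (metis prod.collapse)

lemmas oexp = omul_def qmul_def qconj_def oconj_def obasis_def ocoord_def inner_prod_def
  scaleR_prod_def plus_prod_def minus_prod_def uminus_prod_def zero_prod_def

lemma omul_add1: "omul (x + y) z = omul x z + omul y z"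
  by (rule oct_cases[of x], rule oct_cases[of y], rule oct_cases[of z]) (simp add: oexp algebra_simps)
lemma omul_add2: "omul z (x + y) = omul z x + omul z y"
  by (rule oct_cases[of x], rule oct_cases[of y], rule oct_cases[of z]) (simp add: oexp algebra_simps)
lemma omul_scale1: "omul (r *\<^sub>R x) z = r *\<^sub>R omul x z"
  by (rule oct_cases[of x], rule oct_cases[of z]) (simp add: oexp algebra_simps)
lemma omul_scale2: "omul z (r *\<^sub>R x) = r *\<^sub>R omul z x"
  by (rule oct_cases[of x], rule oct_cases[of z]) (simp add: oexp algebra_simps)
lemma omul_alt: "omul x (omul x y) = omul (omul x x) y"
  by (rule oct_cases[of x], rule oct_cases[of y]) (simp add: oexp algebra_simps)

lemma S_char: "I \<in> sphere_S \<longleftrightarrow> ocoord I 0 = 0 \<and> norm I = 1"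
proof (rule oct_cases[of I])
  fix x0 x1 x2 x3 x4 x5 x6 x7 assume I: "I = (((x0,x1),(x2,x3)),((x4,x5),(x6,x7)))"
  have n: "(norm I)^2 = x0^2+x1^2+x2^2+x3^2+x4^2+x5^2+x6^2+x7^2"
    unfolding I by (simp add: norm_Pair power2_eq_square)
  show ?thesis
  proof
    assume "I \<in> sphere_S"
    then have e: "x0*x0 - x1*x1 - x2*x2-x3*x3-x4*x4-x5*x5-x6*x6-x7*x7 = -1"
      "x0*x1 = 0" "x0*x2=0" "x0*x3=0" "x0*x4=0" "x0*x5=0" "x0*x6=0" "x0*x7=0"
      unfolding sphere_S_def I by (simp_all add: oexp algebra_simps)
    have "x0 = 0"
    proof (rule ccontr)
      assume "x0 \<noteq> 0"
      with e have "x1=0" "x2=0" "x3=0" "x4=0" "x5=0" "x6=0" "x7=0" by simp_all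
      with e(1) have "x0*x0 = -1" by simp
      then show False by (metis add.inverse_inverse neg_0_le_iff_le neg_le_0_iff_le not_one_le_zero zero_le_square)
    qed
    with e(1) n have "(norm I)^2 = 1" by (simp add: power2_eq_square)
    then have "norm I = 1" using norm_ge_zero[of I] by (simp add: power2_eq_1_iff)
    with \<open>x0 = 0\<close> show "ocoord I 0 = 0 \<and> norm I = 1" unfolding I by (simp add: oexp)
  next
    assume a: "ocoord I 0 = 0 \<and> norm I = 1"
    then have "x0 = 0" unfolding I by (simp add: oexp)
    with a n have "x1^2+x2^2+x3^2+x4^2+x5^2+x6^2+x7^2 = 1" by simp
    with \<open>x0 = 0\<close> show "I \<in> sphere_S" unfolding sphere_S_def I by (simp add: oexp algebra_simps power2_eq_square)
  qed
qed

lemma Pset: "{(m,n). 1 \<le> m \<and> m < n \<and> n \<le> (7::nat)} = {(1,2),(1,3),(1,4),(1,5),(1,6),(1,7),(2,3),(2,4),(2,5),(2,6),(2,7),(3,4),(3,5),(3,6),(3,7),(4,5),(4,6),(4,7),(5,6),(5,7),(6,7)}"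
proof (rule set_eqI, clarify)
  fix m n :: nat
  have "(1 \<le> m \<and> m < n \<and> n \<le> 7) \<longleftrightarrow> (m,n) \<in> {(1,2),(1,3),(1,4),(1,5),(1,6),(1,7),(2,3),(2,4),(2,5),(2,6),(2,7),(3,4),(3,5),(3,6),(3,7),(4,5),(4,6),(4,7),(5,6),(5,7),(6,7)}"
  proof
    assume "1 \<le> m \<and> m < n \<and> n \<le> 7"
    then have "m \<in> {1..7}" "n \<in> {1..7}" "m < n" by auto
    then show "(m,n) \<in> {(1,2),(1,3),(1,4),(1,5),(1,6),(1,7),(2,3),(2,4),(2,5),(2,6),(2,7),(3,4),(3,5),(3,6),(3,7),(4,5),(4,6),(4,7),(5,6),(5,7),(6,7)}"
      by (simp add: numeral_eq_Suc atLeastAtMostSuc_conv) (elim disjE; simp)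
  qed auto
  then show "((m,n) \<in> {(m,n). 1 \<le> m \<and> m < n \<and> n \<le> (7::nat)}) = ((m,n) \<in> {(1,2),(1,3),(1,4),(1,5),(1,6),(1,7),(2,3),(2,4),(2,5),(2,6),(2,7),(3,4),(3,5),(3,6),(3,7),(4,5),(4,6),(4,7),(5,6),(5,7),(6,7)})" by simp
qed

lemma n7: "n \<in> {1..7} \<Longrightarrow> n = 1 \<or> n = 2 \<or> n = 3 \<or> n = 4 \<or> n = 5 \<or> n = 6 \<or> (n::nat) = 7"
  by auto

lemma ee: "n \<in> {1..7} \<Longrightarrow> omul (obasis n) (omul (obasis n) c) = - c"
  by (rule oct_cases[of c], drule n7, elim disjE) (simp_all add: oexp)

lemma eee: "m \<in> {1..7} \<Longrightarrow> n \<in> {1..7} \<Longrightarrow> m \<noteq> n \<Longrightarrow>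
   omul (obasis m) (omul (obasis n) (omul (obasis m) c)) = omul (obasis n) c"
  by (rule oct_cases[of c], drule n7, drule n7, elim disjE) (simp_all add: oexp)

lemma sumP: assumes "ocoord I 0 = 0"
  shows "(\<Sum>(m,n)\<in>{(m,n). 1 \<le> m \<and> m < n \<and> n \<le> (7::nat)}. ocoord I m *\<^sub>R obasis m + ocoord I n *\<^sub>R obasis n) = 6 *\<^sub>R I"
proof (rule oct_cases[of I])
  fix x0 x1 x2 x3 x4 x5 x6 x7
  assume I: "I = (((x0,x1),(x2,x3)),((x4,x5),(x6,x7)))"
  from assms have "x0 = 0" unfolding I by (simp add: oexp)
  then show ?thesis unfolding Pset I by (simp add: oexp)
qed


lemma omul_zero1[simp]: "omul 0 c = 0"
  by (rule oct_cases[of c]) (simp add: oexp)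
lemma omul_zero2[simp]: "omul c 0 = 0"
  by (rule oct_cases[of c]) (simp add: oexp)
lemma omul_neg_one: "omul (- obasis 0) c = - c"
  by (rule oct_cases[of c]) (simp add: oexp)
lemma omul_one: "omul (obasis 0) c = c"
  by (rule oct_cases[of c]) (simp add: oexp)

lemma omul_diff1: "omul (x - y) z = omul x z - omul y z"
  by (rule oct_cases[of x], rule oct_cases[of y], rule oct_cases[of z]) (simp add: oexp algebra_simps)
lemma omul_diff2: "omul z (x - y) = omul z x - omul z y"
  by (rule oct_cases[of x], rule oct_cases[of y], rule oct_cases[of z]) (simp add: oexp algebra_simps)
lemma omul_neg2: "omul z (- x) = - omul z x"
  by (rule oct_cases[of x], rule oct_cases[of z]) (simp add: oexp algebra_simps)

lemma omul_neg1: "omul (- x) z = - omul x z"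
  by (rule oct_cases[of x], rule oct_cases[of z]) (simp add: oexp algebra_simps)

lemma omul_sum1: "omul (sum g P) c = (\<Sum>p\<in>P. omul (g p) c)"
proof (cases "finite P")
  case True then show ?thesis by (induction P rule: finite_induct) (simp_all add: omul_add1)
qed simp

lemma gam: assumes "ocoord I 0 = 0"
  shows "(\<Sum>(m,n)\<in>{(m,n). 1 \<le> m \<and> m < n \<and> n \<le> (7::nat)}. omul (obasis m) (omul (obasis n)
     (omul (ocoord I m *\<^sub>R obasis n - ocoord I n *\<^sub>R obasis m) c))) = - 6 *\<^sub>R omul I c"
proof -
  have "(\<Sum>(m,n)\<in>{(m,n). 1 \<le> m \<and> m < n \<and> n \<le> (7::nat)}. omul (obasis m) (omul (obasis n)
     (omul (ocoord I m *\<^sub>R obasis n - ocoord I n *\<^sub>R obasis m) c)))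
    = (\<Sum>(m,n)\<in>{(m,n). 1 \<le> m \<and> m < n \<and> n \<le> (7::nat)}. - omul (ocoord I m *\<^sub>R obasis m + ocoord I n *\<^sub>R obasis n) c)"
  proof (rule sum.cong[OF refl], clarify)
    fix m n :: nat assume mn: "1 \<le> m" "m < n" "n \<le> 7"
    have d: "x - y = x + (-1::real) *\<^sub>R y" for x y :: oct by simp
    show "omul (obasis m) (omul (obasis n)
     (omul (ocoord I m *\<^sub>R obasis n - ocoord I n *\<^sub>R obasis m) c)) = - omul (ocoord I m *\<^sub>R obasis m + ocoord I n *\<^sub>R obasis n) c"
      using mn
      by (simp add: omul_add1 omul_diff1 omul_diff2 omul_neg2 omul_scale1 omul_scale2 ee eee)
  qed
  also have "\<dots> = - omul (\<Sum>(m,n)\<in>{(m,n). 1 \<le> m \<and> m < n \<and> n \<le> (7::nat)}. ocoord I m *\<^sub>R obasis m + ocoord I n *\<^sub>R obasis n) c"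
    by (simp add: omul_sum1 sum_negf case_prod_unfold)
  also have "\<dots> = - 6 *\<^sub>R omul I c" using sumP[OF assms] by (simp add: omul_scale1)
  finally show ?thesis .
qed


lemma ocoord_lin: "ocoord (x + y) h = ocoord x h + ocoord y h" "ocoord (r *\<^sub>R x) h = r * ocoord x h"
  by (simp_all add: ocoord_def inner_add_left)

lemma rot_in_S:
  assumes I: "I \<in> sphere_S" and J: "J \<in> sphere_S" and o: "inner I J = 0"
  shows "cos t *\<^sub>R I + sin t *\<^sub>R J \<in> sphere_S"
proof -
  from I J have c: "ocoord I 0 = 0" "norm I = 1" "ocoord J 0 = 0" "norm J = 1" by (simp_all add: S_char)
  have ii: "inner I I = 1" "inner J J = 1" using c by (simp_all add: power2_norm_eq_inner[symmetric])
  have "(norm (cos t *\<^sub>R I + sin t *\<^sub>R J))^2 = inner (cos t *\<^sub>R I + sin t *\<^sub>R J) (cos t *\<^sub>R I + sin t *\<^sub>R J)"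
    by (simp only: power2_norm_eq_inner)
  also have "\<dots> = (cos t)^2 * inner I I + (sin t)^2 * inner J J + 2 * cos t * sin t * inner I J"
    by (simp add: inner_add_left inner_add_right inner_commute algebra_simps power2_eq_square)
  also have "\<dots> = 1" using ii o by simp
  finally have "norm (cos t *\<^sub>R I + sin t *\<^sub>R J) = 1" using norm_ge_zero[of "cos t *\<^sub>R I + sin t *\<^sub>R J"] by (simp add: power2_eq_1_iff)
  then show ?thesis using c by (simp add: S_char ocoord_lin)
qed

lemma deriv_tangent:
  assumes stem: "is_stem D f F1 F2" and ab: "(a,b) \<in> D" and I: "I \<in> sphere_S" and J: "J \<in> sphere_S"
    and o: "inner I J = 0" and L: "(f has_derivative L) (at (a *\<^sub>R obasis 0 + b *\<^sub>R I))"
  shows "L (b *\<^sub>R J) = omul J (F2 (a,b))"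
proof -
  define g where "g t = a *\<^sub>R obasis 0 + b *\<^sub>R (cos t *\<^sub>R I + sin t *\<^sub>R J)" for t :: real
  have g0: "g 0 = a *\<^sub>R obasis 0 + b *\<^sub>R I" by (simp add: g_def)
  have gd: "(g has_derivative (\<lambda>h. h *\<^sub>R (b *\<^sub>R J))) (at 0)"
  proof -
    have "(g has_vector_derivative (b *\<^sub>R (- sin 0 *\<^sub>R I + cos 0 *\<^sub>R J))) (at 0)"
      unfolding g_def by (intro derivative_eq_intros) (simp_all, simp)
    then show ?thesis by (simp add: has_vector_derivative_def)
  qed
  have L': "(f has_derivative L) (at (g 0))" unfolding g0 by (rule L)
  have c1: "((f \<circ> g) has_derivative (L \<circ> (\<lambda>h. h *\<^sub>R (b *\<^sub>R J)))) (at 0)"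
    by (rule diff_chain_at[OF gd L'])
  have st: "\<forall>a b I. (a,b) \<in> D \<longrightarrow> I \<in> sphere_S \<longrightarrow>
        f (a *\<^sub>R obasis 0 + b *\<^sub>R I) = F1 (a,b) + omul I (F2 (a,b))"
    using stem unfolding is_stem_def by (rule conjunct2)
  have fg: "(f \<circ> g) t = F1 (a,b) + cos t *\<^sub>R omul I (F2 (a,b)) + sin t *\<^sub>R omul J (F2 (a,b))" for t
  proof -
    have "(f \<circ> g) t = F1 (a,b) + omul (cos t *\<^sub>R I + sin t *\<^sub>R J) (F2 (a,b))"
      unfolding g_def comp_def by (rule st[rule_format, OF ab rot_in_S[OF I J o]])
    then show ?thesis by (simp only: omul_add1 omul_scale1 add.assoc)
  qed
  have c2: "((f \<circ> g) has_derivative (\<lambda>h. h *\<^sub>R omul J (F2 (a,b)))) (at 0)"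
  proof -
    have "((\<lambda>t. F1 (a,b) + cos t *\<^sub>R omul I (F2 (a,b)) + sin t *\<^sub>R omul J (F2 (a,b))) has_vector_derivative
        (0 + (- sin 0) *\<^sub>R omul I (F2 (a,b)) + cos 0 *\<^sub>R omul J (F2 (a,b)))) (at 0)"
      by (intro derivative_eq_intros) (simp_all, simp?)
    then have "((\<lambda>t. F1 (a,b) + cos t *\<^sub>R omul I (F2 (a,b)) + sin t *\<^sub>R omul J (F2 (a,b))) has_vector_derivative
        omul J (F2 (a,b))) (at 0)" by simp
    moreover have "(f \<circ> g) = (\<lambda>t. F1 (a,b) + cos t *\<^sub>R omul I (F2 (a,b)) + sin t *\<^sub>R omul J (F2 (a,b)))"
      by (rule ext) (rule fg)
    ultimately show ?thesis unfolding has_vector_derivative_def by simp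
  qed
  have "L \<circ> (\<lambda>h. h *\<^sub>R (b *\<^sub>R J)) = (\<lambda>h. h *\<^sub>R omul J (F2 (a,b)))"
    using has_derivative_unique[OF c1 c2] .
  from fun_cong[OF this, of 1] show ?thesis by simp
qed

lemma deriv_w:
  assumes stem: "is_stem D f F1 F2" and ab: "(a,b) \<in> D" and b: "b \<noteq> 0" and I: "I \<in> sphere_S"
    and w0: "ocoord w 0 = 0" and o: "inner I w = 0"
    and L: "(f has_derivative L) (at (a *\<^sub>R obasis 0 + b *\<^sub>R I))"
  shows "L w = (1/b) *\<^sub>R omul w (F2 (a,b))"
proof (cases "w = 0")
  case True
  have "linear L" using L has_derivative_linear by blast
  then show ?thesis using True by (simp add: linear_0)
next
  case False
  have lin: "linear L" using L has_derivative_linear by blast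
  define J where "J = (1 / norm w) *\<^sub>R w"
  have nw: "norm w > 0" using False by simp
  have J: "J \<in> sphere_S" unfolding S_char J_def using w0 nw by (simp add: ocoord_lin)
  have oJ: "inner I J = 0" unfolding J_def using o by simp
  have e: "L (b *\<^sub>R J) = omul J (F2 (a,b))" by (rule deriv_tangent[OF stem ab I J oJ L])
  have wJ: "w = (norm w / b) *\<^sub>R (b *\<^sub>R J)" unfolding J_def using nw b by simp
  have "L w = (norm w / b) *\<^sub>R L (b *\<^sub>R J)" by (subst wJ) (simp add: linear_scale[OF lin])
  also have "\<dots> = (1/b) *\<^sub>R omul ((norm w) *\<^sub>R J) (F2 (a,b))" by (simp add: e omul_scale1)
  also have "(norm w) *\<^sub>R J = w" unfolding J_def using nw by simp
  finally show ?thesis .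
qed

lemma obasis_inner0: "m \<noteq> 0 \<Longrightarrow> inner (obasis 0) (obasis m) = 0"
  by (simp add: obasis_def inner_prod_def)
lemma obasis_inner0': "m \<noteq> 0 \<Longrightarrow> inner (obasis m) (obasis 0) = 0"
  by (simp add: obasis_def inner_prod_def)

lemma oIm_imag: "ocoord I 0 = 0 \<Longrightarrow> (\<Sum>h\<in>{1..7}. ocoord I h *\<^sub>R obasis h) = I"
  by (rule oct_cases[of I]) (simp add: oexp numeral_eq_Suc)

lemma oconj_imag: "ocoord I 0 = 0 \<Longrightarrow> oconj I = - I"
  by (rule oct_cases[of I]) (simp add: oexp)

theorem lemma2p12:
  fixes D :: "(real \<times> real) set" and f :: "oct \<Rightarrow> oct"
    and F1 F2 :: "real \<times> real \<Rightarrow> oct"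
  assumes "open D" and "D \<noteq> {}"
    and "\<forall>a b. (a,b) \<in> D \<longrightarrow> (a,-b) \<in> D"
    and "connected (OmegaD D)"
    and "is_stem D f F1 F2"
    and "C1_on (OmegaD D) f"
  shows "\<forall>a b I. (a,b) \<in> D \<longrightarrow> b \<noteq> 0 \<longrightarrow> I \<in> sphere_S \<longrightarrow>
           spherical_derivative_stem F2 a b =
             (1/6) *\<^sub>R omul (oinv (oIm (a *\<^sub>R obasis 0 + b *\<^sub>R I)))
                              (Gamma f (a *\<^sub>R obasis 0 + b *\<^sub>R I))"
proof (intro allI impI)
  fix a b I assume ab: "(a,b) \<in> D" and b: "b \<noteq> 0" and I: "I \<in> sphere_S"
  define x where "x = a *\<^sub>R obasis 0 + b *\<^sub>R I"
  define c where "c = F2 (a,b)"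
  have I0: "ocoord I 0 = 0" and nI: "norm I = 1" using I by (simp_all add: S_char)
  from assms(6) obtain f' :: "oct \<Rightarrow> oct \<Rightarrow>\<^sub>L oct" where
    f': "\<forall>x\<in>OmegaD D. (f has_derivative blinfun_apply (f' x)) (at x)" unfolding C1_on_def by blast
  have xO: "x \<in> OmegaD D" unfolding x_def OmegaD_def using ab I by blast
  define L where "L = blinfun_apply (f' x)"
  have L: "(f has_derivative L) (at x)" using f' xO unfolding L_def by blast
  have lin: "linear L" using L has_derivative_linear by blast
  have op: "opartial f n x = L (obasis n)" for n
    unfolding opartial_def using frechet_derivative_at[OF L] by simp
  have xc: "ocoord x m = b * ocoord I m" if "m \<ge> 1" for m
    using that unfolding x_def by (simp add: ocoord_def inner_add_left obasis_inner0)
  have Lop: "Lop m n f x = omul (ocoord I m *\<^sub>R obasis n - ocoord I n *\<^sub>R obasis m) c"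
    if mn: "1 \<le> m" "m < n" "n \<le> 7" for m n
  proof -
    define w where "w = ocoord x m *\<^sub>R obasis n - ocoord x n *\<^sub>R obasis m"
    have "Lop m n f x = L w" unfolding Lop_def op w_def
      by (simp add: linear_diff[OF lin] linear_scale[OF lin])
    also have "\<dots> = (1/b) *\<^sub>R omul w c"
    proof -
      have w0: "ocoord w 0 = 0" unfolding w_def using mn by (simp add: ocoord_def inner_diff_left obasis_inner0')
      have "inner I w = ocoord x m * ocoord I n - ocoord x n * ocoord I m"
        unfolding w_def by (simp add: ocoord_def inner_diff_right)
      also have "\<dots> = 0" using mn by (simp add: xc)
      finally have o: "inner I w = 0" .
      show ?thesis unfolding c_def by (rule deriv_w[OF assms(5) ab b I w0 o L[unfolded x_def]])
    qed
    also have "\<dots> = omul (ocoord I m *\<^sub>R obasis n - ocoord I n *\<^sub>R obasis m) c"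
      unfolding w_def using mn b by (simp add: xc omul_scale1 omul_diff1 algebra_simps)
    finally show ?thesis .
  qed
  have G: "Gamma f x = 6 *\<^sub>R omul I c"
  proof -
    have "Gamma f x = - (\<Sum>(m,n)\<in>{(m,n). 1 \<le> m \<and> m < n \<and> n \<le> (7::nat)}. omul (obasis m) (omul (obasis n)
     (omul (ocoord I m *\<^sub>R obasis n - ocoord I n *\<^sub>R obasis m) c)))"
      unfolding Gamma_def by (intro arg_cong[where f=uminus] sum.cong refl) (auto simp: Lop)
    then show ?thesis using gam[OF I0, of c] by simp
  qed
  have Im: "oIm x = b *\<^sub>R I"
  proof -
    have "oIm x = (\<Sum>h\<in>{1..7}. b *\<^sub>R (ocoord I h *\<^sub>R obasis h))"
      unfolding oIm_def by (intro sum.cong refl) (simp add: xc)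
    also have "\<dots> = b *\<^sub>R I" unfolding scaleR_sum_right[symmetric] oIm_imag[OF I0] ..
    finally show ?thesis .
  qed
  have inv: "oinv (oIm x) = (- 1 / b) *\<^sub>R I"
    unfolding Im oinv_def using b nI
    by (simp add: oconj_imag ocoord_lin I0 power2_eq_square)
  have II: "omul I (omul I c) = - c"
    using I by (simp add: omul_alt sphere_S_def omul_neg_one)
  have E: "(1/6) *\<^sub>R omul ((- 1 / b) *\<^sub>R I) (6 *\<^sub>R omul I c) = (1/b) *\<^sub>R c"
  proof -
    have "(1/6) *\<^sub>R omul ((- 1 / b) *\<^sub>R I) (6 *\<^sub>R omul I c) = ((1/6) * (6 * (- 1 / b))) *\<^sub>R omul I (omul I c)"
      by (simp only: omul_scale1 omul_scale2 scaleR_scaleR)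
    also have "\<dots> = (1/b) *\<^sub>R c" by (simp add: II)
    finally show ?thesis .
  qed
  show "spherical_derivative_stem F2 a b = (1/6) *\<^sub>R omul (oinv (oIm x)) (Gamma f x)"
  proof -
    have "spherical_derivative_stem F2 a b = (1/b) *\<^sub>R c" unfolding spherical_derivative_stem_def c_def ..
    also have "\<dots> = (1/6) *\<^sub>R omul (oinv (oIm x)) (Gamma f x)"
      unfolding inv G by (rule E[symmetric])
    finally show ?thesis .
  qed
qed

end
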